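(* Let $A\subset\mathbf{Z}_{\geq0}$ be finite with $0\in A$, $N=\#A\geq2$, $A(x)=\sum_{a\in A}x^a$, and suppose $A(x)$ has a spectrum $\{\theta_1,\dots,\theta_{N-1}\}$; set $\theta_0=0$ and $\epsilon_{ij}=e^{2\pi i(\theta_i-\theta_j)}$. If the number of distinct roots of $A(x)$ on the unit circle is less than $\frac{3N}{2}-1$, then $G=\{\epsilon_{ij}: 0\leq i,j\leq N-1\}$ is a multiplicative group, and it equals the group of all $N$-th roots of unity.
   Context: A set $\{\theta_1,\dots,\theta_{N-1}\}\subset(0,1)$ is called a spectrum for $A(x)$ if the $\theta_j$ are pairwise distinct and, with $\theta_0=0$, $A(e^{2\pi i(\theta_i-\theta_j)})=0$ for all $0\leq i,j\leq N-1$ with $i\neq j$. *)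

theory Defs
  imports "HOL-Analysis.Analysis"
begin

definition genfun :: "nat set \<Rightarrow> complex \<Rightarrow> complex" where
  "genfun A x = (\<Sum>a\<in>A. x ^ a)"

definition eps :: "(nat \<Rightarrow> real) \<Rightarrow> nat \<Rightarrow> nat \<Rightarrow> complex" where
  "eps \<theta> i j = exp (2 * pi * \<i> * complex_of_real (\<theta> i - \<theta> j))"

definition is_spectrum :: "nat set \<Rightarrow> (nat \<Rightarrow> real) \<Rightarrow> bool" where
  "is_spectrum A \<theta> \<longleftrightarrow>
     (let N = card A in
       \<theta> 0 = 0 \<and>
       (\<forall>j\<in>{1..<N}. 0 < \<theta> j \<and> \<theta> j < 1) \<and>
       inj_on \<theta> {1..<N} \<and>
       (\<forall>i<N. \<forall>j<N. i \<noteq> j \<longrightarrow> genfun A (eps \<theta> i j) = 0))"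

end

theory Submission
  imports Defs
begin

lemma freiman_closed:
  fixes T :: "'a::field set"
  assumes fin: "finite T" and nz: "0 \<notin> T"
    and Gd: "G = {a / b | a b. a \<in> T \<and> b \<in> T}"
    and small: "2 * card G < 3 * card T"
    and x: "x \<in> G" and y: "y \<in> G"
  shows "x / y \<in> G"
proof -
  have Gim: "G = (\<lambda>(a,b). a / b) ` (T \<times> T)" unfolding Gd by auto
  have finG: "finite G" unfolding Gim using fin by auto
  have P: "card T < 2 * card {d\<in>T. d * z \<in> T}" if zG: "z \<in> G" for z
  proof -
    obtain s t where st: "s \<in> T" "t \<in> T" "z = s / t" using zG Gd by auto
    have s0: "s \<noteq> 0" and t0: "t \<noteq> 0" using st nz by auto
    define X where "X = (\<lambda>c. c / s) ` T"
    define Y where "Y = (\<lambda>c. c / t) ` T"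
    have cX: "card X = card T" unfolding X_def
      by (rule card_image) (auto simp: inj_on_def s0)
    have cY: "card Y = card T" unfolding Y_def
      by (rule card_image) (auto simp: inj_on_def t0)
    have XG: "X \<union> Y \<subseteq> G" unfolding X_def Y_def Gd using st by auto
    have fX: "finite X" "finite Y" unfolding X_def Y_def using fin by auto
    have "card (X \<union> Y) \<le> card G" using XG finG card_mono by blast
    moreover have "card X + card Y = card (X \<union> Y) + card (X \<inter> Y)"
      using card_Un_Int fX by blast
    ultimately have c1: "card (X \<inter> Y) + card G \<ge> 2 * card T" using cX cY by linarith
    have sub: "(\<lambda>w. w * t) ` (X \<inter> Y) \<subseteq> {d\<in>T. d * z \<in> T}"
    proof
      fix v assume "v \<in> (\<lambda>w. w * t) ` (X \<inter> Y)"
      then obtain w where w: "w \<in> X" "w \<in> Y" "v = w * t" by auto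
      obtain c where c: "c \<in> T" "w = c / s" using w(1) X_def by auto
      obtain d where d: "d \<in> T" "w = d / t" using w(2) Y_def by auto
      have "v = d" using w(3) d t0 by simp
      moreover have "v * z = c" using w(3) c st s0 t0 by simp
      ultimately show "v \<in> {d\<in>T. d * z \<in> T}" using c d by auto
    qed
    have "card ((\<lambda>w. w * t) ` (X \<inter> Y)) = card (X \<inter> Y)"
      by (rule card_image) (auto simp: inj_on_def t0)
    moreover have "card ((\<lambda>w. w * t) ` (X \<inter> Y)) \<le> card {d\<in>T. d * z \<in> T}"
      using sub fin by (intro card_mono) auto
    ultimately show ?thesis using c1 small by linarith
  qed
  have "{d\<in>T. d * x \<in> T} \<inter> {d\<in>T. d * y \<in> T} \<noteq> {}"
  proof
    assume e: "{d\<in>T. d * x \<in> T} \<inter> {d\<in>T. d * y \<in> T} = {}"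
    have "card ({d\<in>T. d * x \<in> T} \<union> {d\<in>T. d * y \<in> T}) = card {d\<in>T. d * x \<in> T} + card {d\<in>T. d * y \<in> T}"
      using e fin by (intro card_Un_disjoint) auto
    moreover have "card ({d\<in>T. d * x \<in> T} \<union> {d\<in>T. d * y \<in> T}) \<le> card T"
      using fin by (intro card_mono) auto
    ultimately show False using P[OF x] P[OF y] by linarith
  qed
  then obtain d where d: "d \<in> T" "d * x \<in> T" "d * y \<in> T" by auto
  have "d \<noteq> 0" using d nz by auto
  hence "x / y = (d * x) / (d * y)" by simp
  thus ?thesis using d Gd by blast
qed

lemma fin_group_pow:
  fixes G :: "'a::field set"
  assumes fin: "finite G" and nz: "0 \<notin> G" and cl: "\<forall>x\<in>G. \<forall>y\<in>G. x * y \<in> G"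
    and g: "g \<in> G"
  shows "g ^ card G = 1"
proof -
  have g0: "g \<noteq> 0" using g nz by auto
  have inj: "inj_on ((*) g) G" by (auto simp: inj_on_def g0)
  have img: "(*) g ` G = G"
  proof (rule card_subset_eq[OF fin])
    show "(*) g ` G \<subseteq> G" using cl g by auto
    show "card ((*) g ` G) = card G" using card_image[OF inj] .
  qed
  have "prod (\<lambda>z. z) G = prod (\<lambda>z. z) ((*) g ` G)" using img by simp
  also have "\<dots> = prod (\<lambda>z. g * z) G" using prod.reindex[OF inj] by (simp add: comp_def)
  also have "\<dots> = g ^ card G * prod (\<lambda>z. z) G" by (simp add: prod.distrib)
  finally have "1 * prod (\<lambda>z. z) G = g ^ card G * prod (\<lambda>z. z) G" by simp
  moreover have "prod (\<lambda>z. z) G \<noteq> 0" using fin nz by auto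
  ultimately show ?thesis by (metis mult_right_cancel)
qed

theorem mainTheorem13:
  fixes A :: "nat set" and \<theta> :: "nat \<Rightarrow> real"
  assumes "finite A" and "0 \<in> A" and "card A \<ge> 2"
    and "is_spectrum A \<theta>"
    and "real (card {z. cmod z = 1 \<and> genfun A z = 0}) < 3 * real (card A) / 2 - 1"
  shows "(let G = {eps \<theta> i j | i j. i < card A \<and> j < card A} in
           1 \<in> G \<and> (\<forall>x\<in>G. \<forall>y\<in>G. x * y \<in> G) \<and> (\<forall>x\<in>G. inverse x \<in> G)
           \<and> G = {z. z ^ card A = 1})"
proof -
  define N where "N = card A"
  define u where "u i = exp (2 * pi * \<i> * complex_of_real (\<theta> i))" for i
  define T where "T = u ` {..<N}"
  define G where "G = {eps \<theta> i j | i j. i < N \<and> j < N}"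
  define Z where "Z = {z. cmod z = 1 \<and> genfun A z = 0}"
  have sp: "\<theta> 0 = 0" "\<And>i j. i < N \<Longrightarrow> j < N \<Longrightarrow> i \<noteq> j \<Longrightarrow> genfun A (eps \<theta> i j) = 0"
    using assms(4) unfolding is_spectrum_def Let_def N_def by auto
  have N2: "N \<ge> 2" using assms(3) N_def by simp
  have epsu: "eps \<theta> i j = u i / u j" for i j
    unfolding eps_def u_def by (simp add: exp_diff[symmetric] algebra_simps)
  have u0: "u i \<noteq> 0" for i unfolding u_def by simp
  have u00: "u 0 = 1" unfolding u_def using sp by simp
  have g1: "genfun A 1 = of_nat N" unfolding genfun_def N_def by simp
  have injT: "inj_on u {..<N}"
  proof (rule inj_onI, rule ccontr)
    fix i j assume ij: "i \<in> {..<N}" "j \<in> {..<N}" "u i = u j" "i \<noteq> j"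
    hence "eps \<theta> i j = 1" using epsu u0 by simp
    moreover have "genfun A (eps \<theta> i j) = 0" using sp ij by auto
    ultimately show False using g1 N2 by simp
  qed
  have cT: "card T = N" unfolding T_def using card_image[OF injT] by simp
  have finT: "finite T" unfolding T_def by simp
  have T0: "0 \<notin> T" unfolding T_def using u0 by auto
  have GT: "G = {a / b | a b. a \<in> T \<and> b \<in> T}" unfolding G_def T_def epsu by blast
  have finG: "finite G" using GT finT
  proof -
    have "G = (\<lambda>(a,b). a / b) ` (T \<times> T)" unfolding GT by auto
    thus ?thesis using finT by simp
  qed
  have G0: "0 \<notin> G" unfolding GT using T0 by auto
  have finZ: "finite Z"
  proof -
    define c where "c i = (if i \<in> A then 1 else 0 :: complex)" for i
    have "genfun A z = (\<Sum>i\<le>Max A. c i * z ^ i)" for z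
    proof -
      have "(\<Sum>i\<le>Max A. c i * z ^ i) = (\<Sum>i\<in>{..Max A} \<inter> A. z ^ i)"
        unfolding c_def by (subst sum.inter_restrict) (auto intro: sum.cong)
      also have "{..Max A} \<inter> A = A" using assms(1) by auto
      finally show ?thesis unfolding genfun_def by simp
    qed
    hence "Z \<subseteq> {z. (\<Sum>i\<le>Max A. c i * z ^ i) = 0}" unfolding Z_def by auto
    moreover have "finite {z. (\<Sum>i\<le>Max A. c i * z ^ i) = 0}"
      proof -
      have "\<exists>k\<le>Max A. c k \<noteq> 0" using assms(2) c_def by (intro exI[of _ 0]) auto
      thus ?thesis using polyfun_rootbound[where c=c and n="Max A"] by blast
    qed
    ultimately show ?thesis using finite_subset by blast
  qed
  have GZ: "G \<subseteq> insert 1 Z"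
  proof
    fix z assume "z \<in> G"
    then obtain i j where ij: "i < N" "j < N" "z = eps \<theta> i j" unfolding G_def by auto
    have "cmod z = 1" unfolding ij eps_def by (simp add: norm_exp_eq_Re)
    moreover have "z \<noteq> 1 \<Longrightarrow> genfun A z = 0" using ij sp(2)[of i j] epsu u0 by (cases "i = j") auto
    ultimately show "z \<in> insert 1 Z" unfolding Z_def by auto
  qed
  have "card G \<le> card (insert 1 Z)" using GZ finZ by (intro card_mono) auto
  also have "\<dots> \<le> card Z + 1" using finZ by (simp add: card_insert_if)
  finally have "real (card G) \<le> real (card Z) + 1" by simp
  hence small: "2 * card G < 3 * card T" using assms(5) cT unfolding Z_def N_def by simp
  have div: "x / y \<in> G" if "x \<in> G" "y \<in> G" for x y
    using freiman_closed[OF finT T0 GT small that] .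
  have e00: "eps \<theta> 0 0 = 1" using epsu u0 by simp
  have "eps \<theta> 0 0 \<in> G" unfolding G_def using N2 by (intro CollectI exI[of _ 0] conjI) auto
  hence one: "1 \<in> G" using e00 by simp
  have inv: "inverse x \<in> G" if "x \<in> G" for x
    using div[OF one that] by (simp add: inverse_eq_divide)
  have mul: "\<forall>x\<in>G. \<forall>y\<in>G. x * y \<in> G"
  proof (intro ballI)
    fix x y assume "x \<in> G" "y \<in> G"
    thus "x * y \<in> G" using div[of x "inverse y"] inv by (simp add: divide_inverse)
  qed
  define M where "M = card G"
  have TsG: "T \<subseteq> G"
  proof
    fix t assume "t \<in> T"
    then obtain i where i: "i < N" "t = u i" unfolding T_def by auto
    hence "t = eps \<theta> i 0" using epsu u00 by simp
    moreover have "eps \<theta> i 0 \<in> G" unfolding G_def using i N2 by (intro CollectI exI[of _ i] exI[of _ 0] conjI) auto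
    ultimately show "t \<in> G" by simp
  qed
  have MN: "N \<le> M" unfolding M_def using card_mono[OF finG TsG] cT by simp
  have M0: "M > 0" using MN N2 by simp
  have Groots: "G = {z. z ^ M = 1}"
  proof (rule card_subset_eq)
    show "finite {z::complex. z ^ M = 1}" using M0 by (intro finite_roots_unity) auto
    show "G \<subseteq> {z. z ^ M = 1}" using fin_group_pow[OF finG G0 mul] M_def by auto
    show "card G = card {z::complex. z ^ M = 1}" using card_roots_unity_eq[OF M0] M_def by simp
  qed
  have Sa: "(\<Sum>z\<in>G. z ^ a) = (if M dvd a then of_nat M else 0)" for a
  proof (cases "M dvd a")
    case True
    then obtain k where k: "a = M * k" by auto
    have "(\<Sum>z\<in>G. z ^ a) = (\<Sum>z\<in>G. 1)"
      by (intro sum.cong refl) (simp add: k power_mult Groots)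
    thus ?thesis using True M_def by simp
  next
    case False
    define g where "g = cis (2 * pi * real 1 / real M)"
    have bij: "bij_betw (\<lambda>k. cis (2 * pi * real k / real M)) {..<M} {z. z ^ M = 1}"
      by (rule Complex.bij_betw_roots_unity[OF M0])
    have "g ^ M = cis (real M * (2 * pi * real 1 / real M))" unfolding g_def by (rule Complex.DeMoivre)
    also have "\<dots> = cis (2 * pi)" using M0 by simp
    also have "\<dots> = 1" by (simp add: complex_eq_iff)
    finally have gM: "g ^ M = 1" .
    have gG: "g \<in> G" using gM Groots by auto
    have "g ^ a = g ^ (M * (a div M) + a mod M)" by simp
    also have "\<dots> = (g ^ M) ^ (a div M) * g ^ (a mod M)" by (simp only: power_add power_mult)
    also have "\<dots> = g ^ (a mod M)" using gM by simp
    also have "\<dots> = cis (2 * pi * real (a mod M) / real M)" unfolding g_def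
      by (simp add: Complex.DeMoivre mult_ac)
    finally have ga: "g ^ a = cis (2 * pi * real (a mod M) / real M)" .
    have "a mod M \<noteq> 0" using False by (simp add: dvd_eq_mod_eq_0)
    moreover have "a mod M < M" using M0 by simp
    ultimately have "cis (2 * pi * real (a mod M) / real M) \<noteq> cis (2 * pi * real 0 / real M)"
      using bij M0 unfolding bij_betw_def inj_on_def by (metis lessThan_iff)
    hence ga1: "g ^ a \<noteq> 1" using ga by simp
    have g0: "g \<noteq> 0" using gG G0 by auto
    have inj: "inj_on ((*) g) G" by (auto simp: inj_on_def g0)
    have img: "(*) g ` G = G"
    proof (rule card_subset_eq[OF finG])
      show "(*) g ` G \<subseteq> G" using mul gG by auto
      show "card ((*) g ` G) = card G" using card_image[OF inj] .
    qed
    have "(\<Sum>z\<in>G. z ^ a) = (\<Sum>z\<in>(*) g ` G. z ^ a)" using img by simp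
    also have "\<dots> = (\<Sum>z\<in>G. (g * z) ^ a)" using sum.reindex[OF inj] by (simp add: comp_def)
    also have "\<dots> = g ^ a * (\<Sum>z\<in>G. z ^ a)" by (simp add: power_mult_distrib sum_distrib_left)
    finally have "(g ^ a - 1) * (\<Sum>z\<in>G. z ^ a) = 0" by (simp add: algebra_simps)
    hence "(\<Sum>z\<in>G. z ^ a) = 0" using ga1 by simp
    thus ?thesis using False by simp
  qed
  have "(\<Sum>z\<in>G. genfun A z) = genfun A 1 + (\<Sum>z\<in>G - {1}. genfun A z)"
    using finG one by (simp add: sum.remove)
  also have "(\<Sum>z\<in>G - {1}. genfun A z) = 0"
    using GZ unfolding Z_def by (intro sum.neutral) auto
  finally have s1: "(\<Sum>z\<in>G. genfun A z) = of_nat N" using g1 by simp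
  have "(\<Sum>z\<in>G. genfun A z) = (\<Sum>a\<in>A. \<Sum>z\<in>G. z ^ a)"
    unfolding genfun_def by (rule sum.swap)
  also have "\<dots> = (\<Sum>a\<in>A. of_nat (if M dvd a then M else 0))" using Sa by (intro sum.cong) auto
  also have "\<dots> = of_nat (\<Sum>a\<in>A. (if M dvd a then M else 0))" by simp
  finally have "N = (\<Sum>a\<in>A. (if M dvd a then M else 0))" using s1 by (simp only: of_nat_eq_iff)
  moreover have "(if M dvd 0 then M else 0) \<le> (\<Sum>a\<in>A. (if M dvd a then M else 0))"
    using assms(1,2) by (intro member_le_sum) auto
  ultimately have "M \<le> N" by simp
  hence "M = N" using MN by simp
  hence "G = {z. z ^ card A = 1}" using Groots N_def by simp
  thus ?thesis using one mul inv unfolding Let_def G_def N_def by simp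
qed

end
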